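(* Let $K=\mathbb{Z}/3$ and let $G$ be a simple graph with edges $e_1,\dots,e_s$ ($s\ge 1$). Then the set $\mathcal{T}\cup\mathcal{E}\cup\{t_s^2\}$ is a Gröbner basis of the ideal $(I(X),t_s^2)\subseteq S=K[t_1,\dots,t_s]$ with respect to the graded reverse lexicographic order on $S$ (with $t_1>t_2>\dots>t_s$).
   Context: Let $G$ be a simple graph with vertex set $\{1,\dots,n\}$ and a fixed ordering $e_1,\dots,e_s$ of its edges, $s\ge1$; edge $e_k$ is identified with the variable $t_k$ of $S=K[t_1,\dots,t_s]$. For a finite field $K$, let $X\subseteq\mathbb{P}^{s-1}$ be the image of the projective torus $\{(x_1:\dots:x_n): x_i\neq0 \ \forall i\}\subseteq\mathbb{P}^{n-1}$ under the map whose $k$-th coordinate is $x_ix_j$ when $e_k=\{i,j\}$ (the projective algebraic toric set parameterized by the edges of $G$). $I(X)\subseteq S$ is the ideal generated by the homogeneous polynomials vanishing on all points of $X$. For $\alpha\in\mathbb{N}^s$ write $t^\alpha=t_1^{\alpha_1}\cdots t_s^{\alpha_s}$. An Eulerian subgraph is a subgraph in which every vertex has even degree. A binomial $t^\alpha-t^\beta$ is an Eulerian binomial if $t^\alpha,t^\beta$ are relatively prime, square-free, of the same degree, and the edges $\{e_i: i\in\operatorname{supp}(\alpha)\cup\operatorname{supp}(\beta)\}$ form an Eulerian subgraph of $G$. $\mathcal{E}$ denotes the set of all Eulerian binomials and $\mathcal{T}=\{t_i^2-t_j^2: 1\le i,j\le s\}$. *)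

theory Defs
  imports "HOL-Library.Poly_Mapping" "HOL-Library.Numeral_Type"
begin

text \<open>Polynomials over K = Z/3 (the numeral type 3) in variables t_k indexed by naturals;
 the ring S = K[t_1,...,t_s] is the set of polynomials whose variables lie in {1..s}.\<close>

type_synonym poly3 = "(nat \<Rightarrow>\<^sub>0 nat) \<Rightarrow>\<^sub>0 3"

definition var :: "nat \<Rightarrow> poly3" where
  "var k = Poly_Mapping.single (Poly_Mapping.single k 1) 1"

definition in_S :: "nat \<Rightarrow> poly3 \<Rightarrow> bool" where
  "in_S s (f::poly3) \<longleftrightarrow> (\<forall>m \<in> Poly_Mapping.keys f. Poly_Mapping.keys m \<subseteq> {1..s})"

definition mdeg :: "(nat \<Rightarrow>\<^sub>0 nat) \<Rightarrow> nat" where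
  "mdeg m = (\<Sum>i\<in>Poly_Mapping.keys m. Poly_Mapping.lookup m i)"

definition homogeneous :: "poly3 \<Rightarrow> bool" where
  "homogeneous f \<longleftrightarrow> (\<forall>m\<in>Poly_Mapping.keys f. \<forall>m'\<in>Poly_Mapping.keys f. mdeg m = mdeg m')"

definition eval :: "poly3 \<Rightarrow> (nat \<Rightarrow> 3) \<Rightarrow> 3" where
  "eval f v = (\<Sum>m\<in>Poly_Mapping.keys f. Poly_Mapping.lookup f m * (\<Prod>i\<in>Poly_Mapping.keys m. v i ^ Poly_Mapping.lookup m i))"

inductive_set ideal_in :: "nat \<Rightarrow> poly3 set \<Rightarrow> poly3 set" for s B where
  zero: "0 \<in> ideal_in s B"
| gen: "b \<in> B \<Longrightarrow> b \<in> ideal_in s B"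
| add: "f \<in> ideal_in s B \<Longrightarrow> g \<in> ideal_in s B \<Longrightarrow> f + g \<in> ideal_in s B"
| mult: "in_S s h \<Longrightarrow> f \<in> ideal_in s B \<Longrightarrow> h * f \<in> ideal_in s B"

text \<open>Points of X (affine representatives): coordinate k is x_i x_j for e_k = {i,j},
 with x_i nonzero for all vertices i in {1..n}.\<close>
definition toric_points :: "nat \<Rightarrow> (nat \<Rightarrow> nat set) \<Rightarrow> nat \<Rightarrow> (nat \<Rightarrow> 3) set" where
  "toric_points n e s = {(\<lambda>k. \<Prod>i\<in>e k. x i) | x. \<forall>i\<in>{1..n}. x i \<noteq> 0}"

definition vanishing_ideal :: "nat \<Rightarrow> (nat \<Rightarrow> nat set) \<Rightarrow> nat \<Rightarrow> poly3 set" where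
  "vanishing_ideal n e s = ideal_in s {f. in_S s f \<and> homogeneous f \<and>
      (\<forall>p\<in>toric_points n e s. eval f p = 0)}"

definition grevlex_less :: "(nat \<Rightarrow>\<^sub>0 nat) \<Rightarrow> (nat \<Rightarrow>\<^sub>0 nat) \<Rightarrow> bool" where
  "grevlex_less m m' \<longleftrightarrow> mdeg m < mdeg m' \<or>
     (mdeg m = mdeg m' \<and> (\<exists>k. Poly_Mapping.lookup m' k < Poly_Mapping.lookup m k \<and> (\<forall>j>k. Poly_Mapping.lookup m j = Poly_Mapping.lookup m' j)))"

definition lead_mon :: "poly3 \<Rightarrow> (nat \<Rightarrow>\<^sub>0 nat)" where
  "lead_mon f = (THE m. m \<in> Poly_Mapping.keys f \<and> (\<forall>m'\<in>Poly_Mapping.keys f. m' = m \<or> grevlex_less m' m))"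

definition mon_dvd :: "(nat \<Rightarrow>\<^sub>0 nat) \<Rightarrow> (nat \<Rightarrow>\<^sub>0 nat) \<Rightarrow> bool" where
  "mon_dvd a b \<longleftrightarrow> (\<forall>i. Poly_Mapping.lookup a i \<le> Poly_Mapping.lookup b i)"

definition is_groebner_basis :: "poly3 set \<Rightarrow> poly3 set \<Rightarrow> bool" where
  "is_groebner_basis G I \<longleftrightarrow> G \<subseteq> I \<and>
     (\<forall>f\<in>I. f \<noteq> 0 \<longrightarrow> (\<exists>g\<in>G. g \<noteq> 0 \<and> mon_dvd (lead_mon g) (lead_mon f)))"

definition T_set :: "nat \<Rightarrow> poly3 set" where
  "T_set s = {var i ^ 2 - var j ^ 2 | i j. i \<in> {1..s} \<and> j \<in> {1..s}}"

text \<open>Eulerian binomials: t^A - t^B with A, B disjoint (relatively prime), square-free monomials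
 (indicator sets A, B \<subseteq> {1..s}), same degree, and edges indexed by A \<union> B forming a subgraph
 in which every vertex has even degree.\<close>
definition eulerian_binomials :: "nat \<Rightarrow> (nat \<Rightarrow> nat set) \<Rightarrow> nat \<Rightarrow> poly3 set" where
  "eulerian_binomials n e s = {(\<Prod>i\<in>A. var i) - (\<Prod>i\<in>B. var i) | A B.
      A \<subseteq> {1..s} \<and> B \<subseteq> {1..s} \<and> A \<inter> B = {} \<and> card A = card B \<and>
      (\<forall>v. even (card {k \<in> A \<union> B. v \<in> e k}))}"

end

theory Submission
  imports Defs "HOL-Library.FuncSet"
begin


abbreviation lk where "lk \<equiv> Poly_Mapping.lookup"
abbreviation ks where "ks \<equiv> Poly_Mapping.keys"


lemma grevlex_asym: assumes "grevlex_less a b" shows "\<not> grevlex_less b a"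
proof
  assume h: "grevlex_less b a"
  show False
  proof (cases "mdeg a = mdeg b")
    case False then show ?thesis using assms h unfolding grevlex_less_def by auto
  next
    case True
    obtain k1 where k1: "lk b k1 < lk a k1" "\<forall>j>k1. lk a j = lk b j"
      using assms True unfolding grevlex_less_def by auto
    obtain k2 where k2: "lk a k2 < lk b k2" "\<forall>j>k2. lk b j = lk a j"
      using h True unfolding grevlex_less_def by auto
    show False
    proof (cases k1 k2 rule: linorder_cases)
      case less then have "lk a k2 = lk b k2" using k1(2) by blast
      then show False using k2(1) by simp
    next
      case equal then show False using k1(1) k2(1) by simp
    next
      case greater then have "lk b k1 = lk a k1" using k2(2) by blast
      then show False using k1(1) by simp
    qed
  qed
qed

lemma grevlex_irrefl: "\<not> grevlex_less a a"
  using grevlex_asym by blast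

lemma grevlex_trans:
  assumes "grevlex_less a b" "grevlex_less b c" shows "grevlex_less a c"
proof (cases "mdeg a < mdeg b \<or> mdeg b < mdeg c")
  case True
  then show ?thesis using assms unfolding grevlex_less_def by auto
next
  case False
  then have d: "mdeg a = mdeg b" "mdeg b = mdeg c" using assms unfolding grevlex_less_def by auto
  obtain k1 where k1: "lk b k1 < lk a k1" "\<forall>j>k1. lk a j = lk b j"
    using assms(1) d unfolding grevlex_less_def by auto
  obtain k2 where k2: "lk c k2 < lk b k2" "\<forall>j>k2. lk b j = lk c j"
    using assms(2) d unfolding grevlex_less_def by auto
  have "\<exists>k. lk c k < lk a k \<and> (\<forall>j>k. lk a j = lk c j)"
  proof (cases k1 k2 rule: linorder_cases)
    case less
    then show ?thesis using k1 k2 by (intro exI[of _ k2]) auto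
  next
    case equal
    then show ?thesis using k1 k2 by (intro exI[of _ k2]) auto
  next
    case greater
    then show ?thesis using k1 k2 by (intro exI[of _ k1]) auto
  qed
  then show ?thesis using d unfolding grevlex_less_def by auto
qed

lemma grevlex_total:
  assumes "a \<noteq> b" shows "grevlex_less a b \<or> grevlex_less b a"
proof (cases "mdeg a = mdeg b")
  case False then show ?thesis unfolding grevlex_less_def by auto
next
  case True
  let ?D = "{k. lk a k \<noteq> lk b k}"
  have fin: "finite ?D"
    by (rule finite_subset[of _ "ks a \<union> ks b"]) (auto simp: in_keys_iff)
  have ne: "?D \<noteq> {}"
  proof
    assume "?D = {}"
    then have "a = b" by (intro poly_mapping_eqI) auto
    then show False using assms by simp
  qed
  define k where "k = Max ?D"
  have k: "k \<in> ?D" using fin ne unfolding k_def by (rule Max_in)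
  have ab: "\<forall>j>k. lk a j = lk b j" using fin k_def Max_ge leD by blast
  show ?thesis
  proof (cases "lk a k < lk b k")
    case True then show ?thesis using ab \<open>mdeg a = mdeg b\<close> unfolding grevlex_less_def by auto
  next
    case False then have "lk b k < lk a k" using k by auto
    then show ?thesis using ab \<open>mdeg a = mdeg b\<close> unfolding grevlex_less_def by auto
  qed
qed

lemma lead_mon_eqI:
  assumes "m \<in> ks f" "\<forall>m'\<in>ks f. m' = m \<or> grevlex_less m' m"
  shows "lead_mon f = m"
  unfolding lead_mon_def
proof (rule the_equality)
  show "m \<in> ks f \<and> (\<forall>m'\<in>ks f. m' = m \<or> grevlex_less m' m)" using assms by blast
next
  fix x assume x: "x \<in> ks f \<and> (\<forall>m'\<in>ks f. m' = x \<or> grevlex_less m' x)"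
  show "x = m"
  proof (rule ccontr)
    assume "x \<noteq> m"
    then have "grevlex_less x m" "grevlex_less m x" using x assms by auto
    then show False using grevlex_asym by blast
  qed
qed

lemma max_exists:
  assumes "finite M" "M \<noteq> {}"
  shows "\<exists>m\<in>M. \<forall>m'\<in>M. m' = m \<or> grevlex_less m' m"
  using assms
proof (induction M rule: finite_ne_induct)
  case (singleton x) then show ?case by auto
next
  case (insert x F)
  then obtain m where m: "m \<in> F" "\<forall>m'\<in>F. m' = m \<or> grevlex_less m' m" by auto
  show ?case
  proof (cases "grevlex_less m x")
    case True
    then show ?thesis using m grevlex_trans by (intro bexI[of _ x]) auto
  next
    case False
    then have "x = m \<or> grevlex_less x m" using grevlex_total by blast
    then show ?thesis using m by (intro bexI[of _ m]) auto
  qed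
qed

lemma lead_mon_prop:
  assumes "f \<noteq> 0"
  shows "lead_mon f \<in> ks f \<and> (\<forall>m'\<in>ks f. m' = lead_mon f \<or> grevlex_less m' (lead_mon f))"
proof -
  have "ks f \<noteq> {}" using assms by simp
  then obtain m where "m \<in> ks f" "\<forall>m'\<in>ks f. m' = m \<or> grevlex_less m' m"
    using max_exists[of "ks f"] by auto
  then show ?thesis using lead_mon_eqI by metis
qed



definition chiA :: "nat set \<Rightarrow> (nat \<Rightarrow>\<^sub>0 nat)" where
  "chiA A = (\<Sum>i\<in>A. Poly_Mapping.single i 1)"

lemma lk_chi: "finite A \<Longrightarrow> lk (chiA A) i = (if i \<in> A then 1 else 0)"
  unfolding chiA_def by (simp add: lookup_sum lookup_single when_def)

lemma ks_chi: "finite A \<Longrightarrow> ks (chiA A) = A"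
  by (auto simp: in_keys_iff lk_chi split: if_splits)

lemma var_single: "var i = Poly_Mapping.single (Poly_Mapping.single i 1) 1"
  by (simp add: var_def)

lemma prod_var: "finite A \<Longrightarrow> (\<Prod>i\<in>A. var i) = Poly_Mapping.single (chiA A) 1"
proof (induction A rule: finite_induct)
  case empty then show ?case by (simp add: chiA_def)
next
  case (insert x F)
  then show ?case by (simp add: chiA_def var_single mult_single add.commute)
qed

lemma var_sq: "var i ^ 2 = Poly_Mapping.single (Poly_Mapping.single i 2) 1"
  by (simp add: var_single power2_eq_square mult_single single_add[symmetric]; simp add: numeral_2_eq_2)

lemma mdeg_superset: "finite K \<Longrightarrow> ks m \<subseteq> K \<Longrightarrow> mdeg m = (\<Sum>i\<in>K. lk m i)"
  unfolding mdeg_def by (rule sum.mono_neutral_left) (auto simp: in_keys_iff)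

lemma mdeg_add: "mdeg (a + b) = mdeg a + mdeg b"
proof -
  let ?K = "ks a \<union> ks b"
  have "mdeg (a+b) = (\<Sum>i\<in>?K. lk (a+b) i)"
    by (rule mdeg_superset) (use keys_add[of a b] in auto)
  also have "\<dots> = (\<Sum>i\<in>?K. lk a i) + (\<Sum>i\<in>?K. lk b i)"
    by (simp add: lookup_add sum.distrib)
  also have "\<dots> = mdeg a + mdeg b"
    by (simp add: mdeg_superset[of ?K])
  finally show ?thesis .
qed

lemma mdeg_chi: "finite A \<Longrightarrow> mdeg (chiA A) = card A"
  by (simp add: mdeg_def ks_chi lk_chi)

definition sqf :: "(nat \<Rightarrow>\<^sub>0 nat) \<Rightarrow> bool" where
  "sqf m \<longleftrightarrow> (\<forall>i. lk m i \<le> 1)"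

lemma sqf_chi: assumes "sqf m" shows "m = chiA (ks m)"
proof (rule poly_mapping_eqI)
  fix k
  have "lk m k \<le> 1" using assms sqf_def by auto
  then show "lk m k = lk (chiA (ks m)) k"
    by (cases "lk m k") (auto simp: lk_chi in_keys_iff)
qed

definition wd :: "(nat \<Rightarrow> nat set) \<Rightarrow> nat \<Rightarrow> nat \<Rightarrow> (nat \<Rightarrow>\<^sub>0 nat) \<Rightarrow> nat" where
  "wd e s v m = (\<Sum>i\<in>{1..s}. if v \<in> e i then lk m i else 0)"

definition ov :: "(nat \<Rightarrow> nat set) \<Rightarrow> nat \<Rightarrow> (nat \<Rightarrow>\<^sub>0 nat) \<Rightarrow> nat set" where
  "ov e s m = {v. odd (wd e s v m)}"

definition Pm :: "nat \<Rightarrow> (nat \<Rightarrow>\<^sub>0 nat) \<Rightarrow> nat set" where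
  "Pm s m = {i\<in>{1..s}. odd (lk m i)}"

definition symd :: "nat set \<Rightarrow> nat set \<Rightarrow> nat set" where
  "symd X Y = {v. (v \<in> X) \<noteq> (v \<in> Y)}"

lemma parity_sum: "finite I \<Longrightarrow> even (sum (g::_\<Rightarrow>nat) I) = even (card {i\<in>I. odd (g i)})"
proof (induction I rule: finite_induct)
  case empty then show ?case by simp
next
  case (insert x F)
  have "{i\<in>insert x F. odd (g i)} = (if odd (g x) then insert x {i\<in>F. odd (g i)} else {i\<in>F. odd (g i)})"
    by auto
  then show ?case using insert by auto
qed

lemma wd_add: "wd e s v (a + b) = wd e s v a + wd e s v b"
  unfolding wd_def sum.distrib[symmetric] by (rule sum.cong) (auto simp: lookup_add)

lemma ov_add: "ov e s (a + b) = symd (ov e s a) (ov e s b)"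
  unfolding ov_def symd_def by (auto simp: wd_add)

lemma wd_parity: "even (wd e s v m) = even (card {k\<in>Pm s m. v \<in> e k})"
proof -
  have "even (wd e s v m) = even (card {i\<in>{1..s}. odd (if v \<in> e i then lk m i else 0)})"
    unfolding wd_def by (rule parity_sum) simp
  also have "{i\<in>{1..s}. odd (if v \<in> e i then lk m i else 0)} = {k\<in>Pm s m. v \<in> e k}"
    unfolding Pm_def by auto
  finally show ?thesis .
qed

definition monS :: "nat \<Rightarrow> (nat \<Rightarrow>\<^sub>0 nat) \<Rightarrow> bool" where
  "monS s m \<longleftrightarrow> ks m \<subseteq> {1..s}"

lemma mdeg_monS: "monS s m \<Longrightarrow> mdeg m = (\<Sum>i\<in>{1..s}. lk m i)"
  unfolding monS_def by (rule mdeg_superset) auto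

lemma Pm_parity: "monS s m \<Longrightarrow> even (mdeg m) = even (card (Pm s m))"
  unfolding Pm_def by (simp add: mdeg_monS parity_sum)

lemma Pm_less: assumes "monS s m" "\<not> sqf m" shows "card (Pm s m) < mdeg m"
proof -
  obtain i where i: "lk m i > 1" using assms(2) unfolding sqf_def by (auto simp: not_le)
  then have "i \<in> ks m" by (auto simp: in_keys_iff)
  then have iS: "i \<in> {1..s}" using assms(1) unfolding monS_def by auto
  have "card (Pm s m) = (\<Sum>j\<in>{1..s}. if odd (lk m j) then 1 else 0)"
    using sum.inter_filter[of "{1..s}" "\<lambda>_. 1::nat" "\<lambda>j. odd (lk m j)"] unfolding Pm_def by simp
  also have "\<dots> < (\<Sum>j\<in>{1..s}. lk m j)"
  proof (rule sum_strict_mono_ex1)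
    show "\<forall>x\<in>{1..s}. (if odd (lk m x) then 1 else 0) \<le> lk m x"
      by (auto simp: Suc_le_eq odd_pos)
    show "\<exists>a\<in>{1..s}. (if odd (lk m a) then 1 else 0) < lk m a"
      using  i iS by (intro bexI[of _ i]) auto
  qed simp
  finally show ?thesis using mdeg_monS[OF assms(1)] by simp
qed

lemma Pm_monS: "Pm s m \<subseteq> {1..s}" unfolding Pm_def by auto

lemma Pm_sqf: "monS s m \<Longrightarrow> sqf m \<Longrightarrow> Pm s m = ks m"
proof -
  assume a: "monS s m" "sqf m"
  have "i \<in> Pm s m \<longleftrightarrow> i \<in> ks m" for i
  proof -
    have "lk m i \<le> 1" using a(2) sqf_def by auto
    moreover have "lk m i \<noteq> 0 \<Longrightarrow> i \<in> {1..s}" using a(1) unfolding monS_def by (metis in_keys_iff subsetD)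
    ultimately show ?thesis unfolding Pm_def in_keys_iff
      by (cases "lk m i") auto
  qed
  then show ?thesis by blast
qed



lemma lookup_mult_fin:
  "lk (h * f) k = (\<Sum>l\<in>ks h. \<Sum>q\<in>ks f. if k = l + q then lk h l * lk f q else 0)"
proof -
  have inner: "Sum_any (\<lambda>q. lk f q when k = l + q) = (\<Sum>q\<in>ks f. lk f q when k = l + q)" for l
    by (rule Sum_any.expand_superset) (auto simp: in_keys_iff when_def)
  have "lk (h * f) k = Sum_any (\<lambda>l. lk h l * (\<Sum>q\<in>ks f. lk f q when k = l + q))"
    by (simp add: lookup_mult inner)
  also have "\<dots> = (\<Sum>l\<in>ks h. lk h l * (\<Sum>q\<in>ks f. lk f q when k = l + q))"
    by (rule Sum_any.expand_superset) (auto simp: in_keys_iff)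
  also have "\<dots> = (\<Sum>l\<in>ks h. \<Sum>q\<in>ks f. if k = l + q then lk h l * lk f q else 0)"
    by (simp add: sum_distrib_left) (intro sum.cong refl, simp add: when_def)
  finally show ?thesis .
qed

definition Phi :: "(nat \<Rightarrow> nat set) \<Rightarrow> nat \<Rightarrow> nat set \<Rightarrow> nat \<Rightarrow> poly3 \<Rightarrow> 3" where
  "Phi e s S d f = (\<Sum>m\<in>ks f. if ov e s m = S \<and> mdeg m = d then lk f m else 0)"

definition Good :: "(nat \<Rightarrow> nat set) \<Rightarrow> nat \<Rightarrow> nat set \<Rightarrow> nat \<Rightarrow> bool" where
  "Good e s S d \<longleftrightarrow> (\<exists>m. monS s m \<and> \<not> sqf m \<and> ov e s m = S \<and> mdeg m = d)"

definition PiP :: "(nat \<Rightarrow> nat set) \<Rightarrow> nat \<Rightarrow> poly3 \<Rightarrow> bool" where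
  "PiP e s f \<longleftrightarrow> in_S s f \<and> (\<forall>S d. \<not> Good e s S d \<longrightarrow> Phi e s S d f = 0)"

lemma Phi_superset:
  "finite M \<Longrightarrow> ks f \<subseteq> M \<Longrightarrow> Phi e s S d f = (\<Sum>m\<in>M. if ov e s m = S \<and> mdeg m = d then lk f m else 0)"
  unfolding Phi_def by (rule sum.mono_neutral_left) (auto simp: in_keys_iff)

lemma Phi_add: "Phi e s S d (f + g) = Phi e s S d f + Phi e s S d g"
proof -
  let ?M = "ks f \<union> ks g"
  have "Phi e s S d (f + g) = (\<Sum>m\<in>?M. if ov e s m = S \<and> mdeg m = d then lk (f+g) m else 0)"
    by (rule Phi_superset) (use keys_add[of f g] in auto)
  also have "\<dots> = (\<Sum>m\<in>?M. if ov e s m = S \<and> mdeg m = d then lk f m else 0)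
     + (\<Sum>m\<in>?M. if ov e s m = S \<and> mdeg m = d then lk g m else 0)"
    by (simp add: sum.distrib[symmetric]) (rule sum.cong, auto simp: lookup_add)
  also have "\<dots> = Phi e s S d f + Phi e s S d g"
    by (simp add: Phi_superset[of ?M])
  finally show ?thesis .
qed

lemma Phi_mult: "Phi e s S d (h * f) =
  (\<Sum>l\<in>ks h. lk h l * (\<Sum>q\<in>ks f. if ov e s (l + q) = S \<and> mdeg (l + q) = d then lk f q else 0))"
proof -
  let ?P = "\<lambda>m. ov e s m = S \<and> mdeg m = d"
  let ?M = "(\<lambda>(l,q). l + q) ` (ks h \<times> ks f)"
  have "Phi e s S d (h * f) = (\<Sum>m\<in>?M. if ?P m then lk (h * f) m else 0)"
    by (rule Phi_superset) (use keys_mult[of h f] in auto)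
  also have "\<dots> = (\<Sum>m\<in>?M. \<Sum>l\<in>ks h. \<Sum>q\<in>ks f. if ?P m \<and> m = l + q then lk h l * lk f q else 0)"
  proof (rule sum.cong[OF refl])
    fix m
    show "(if ?P m then lk (h * f) m else 0) = (\<Sum>l\<in>ks h. \<Sum>q\<in>ks f. if ?P m \<and> m = l + q then lk h l * lk f q else 0)"
    proof (cases "?P m")
      case True then show ?thesis by (simp add: lookup_mult_fin)
    next
      case False
      then have z: "(if ?P m \<and> m = l + q then X else 0) = 0" for l q and X :: 3 by auto
      show ?thesis unfolding z using False by auto
    qed
  qed
  also have "\<dots> = (\<Sum>l\<in>ks h. \<Sum>q\<in>ks f. \<Sum>m\<in>?M. if ?P m \<and> m = l + q then lk h l * lk f q else 0)"
    by (simp add: sum.swap[of _ ?M] sum.swap[of _ ?M "ks f"])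
  also have "\<dots> = (\<Sum>l\<in>ks h. \<Sum>q\<in>ks f. if ?P (l + q) then lk h l * lk f q else 0)"
  proof (rule sum.cong[OF refl], rule sum.cong[OF refl])
    fix l q assume lq: "l \<in> ks h" "q \<in> ks f"
    have "(\<Sum>m\<in>?M. if ?P m \<and> m = l + q then lk h l * lk f q else 0)
        = (\<Sum>m\<in>?M. if m = l + q then (if ?P (l+q) then lk h l * lk f q else 0) else 0)"
      by (rule sum.cong) auto
    also have "\<dots> = (if ?P (l+q) then lk h l * lk f q else 0)"
      using lq by (subst sum.delta) auto
    finally show "(\<Sum>m\<in>?M. if ?P m \<and> m = l + q then lk h l * lk f q else 0) = (if ?P (l+q) then lk h l * lk f q else 0)" .
  qed
  also have "\<dots> = (\<Sum>l\<in>ks h. lk h l * (\<Sum>q\<in>ks f. if ?P (l + q) then lk f q else 0))"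
    by (simp add: sum_distrib_left) (intro sum.cong refl, simp)
  finally show ?thesis .
qed



lemma symd_eq_iff: "symd X Y = S \<longleftrightarrow> Y = symd S X"
  unfolding symd_def set_eq_iff by auto

lemma in_S_monS: "in_S s f \<longleftrightarrow> (\<forall>m\<in>ks f. monS s m)"
  unfolding in_S_def monS_def by simp

lemma monS_add: "monS s a \<Longrightarrow> monS s b \<Longrightarrow> monS s (a + b)"
  unfolding monS_def using keys_add[of a b] by auto

lemma not_sqf_add: "\<not> sqf a \<Longrightarrow> \<not> sqf (a + b)"
  unfolding sqf_def by (auto simp: lookup_add) (meson le_add1 le_trans)

lemma in_S_zero: "in_S s 0" by (simp add: in_S_def)

lemma in_S_add: "in_S s f \<Longrightarrow> in_S s g \<Longrightarrow> in_S s (f + g)"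
  unfolding in_S_def using keys_add[of f g] by blast

lemma in_S_mult: assumes "in_S s h" "in_S s f" shows "in_S s (h * f)"
  unfolding in_S_monS
proof
  fix m assume "m \<in> ks (h * f)"
  then obtain a b where "m = a + b" "a \<in> ks h" "b \<in> ks f" using keys_mult[of h f] by blast
  then show "monS s m" using assms monS_add unfolding in_S_monS by auto
qed

lemma PiP_zero: "PiP e s 0"
  unfolding PiP_def Phi_def by (simp add: in_S_zero)

lemma PiP_add: "PiP e s f \<Longrightarrow> PiP e s g \<Longrightarrow> PiP e s (f + g)"
  unfolding PiP_def by (simp add: Phi_add in_S_add)

lemma PiP_mult:
  assumes h: "in_S s h" and f: "PiP e s f"
  shows "PiP e s (h * f)"
  unfolding PiP_def
proof (intro conjI allI impI)
  show "in_S s (h * f)" using h f in_S_mult unfolding PiP_def by blast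
  fix S d assume ng: "\<not> Good e s S d"
  have inner: "(\<Sum>q\<in>ks f. if ov e s (l + q) = S \<and> mdeg (l + q) = d then lk f q else 0) = 0"
    if l: "l \<in> ks h" for l
  proof (cases "mdeg l \<le> d")
    case True
    have ml: "monS s l" using h l in_S_monS by blast
    have "(\<Sum>q\<in>ks f. if ov e s (l + q) = S \<and> mdeg (l + q) = d then lk f q else 0)
      = Phi e s (symd S (ov e s l)) (d - mdeg l) f"
      unfolding Phi_def
    proof (rule sum.cong[OF refl])
      fix q
      have "(ov e s (l + q) = S \<and> mdeg (l + q) = d) \<longleftrightarrow>
            (ov e s q = symd S (ov e s l) \<and> mdeg q = d - mdeg l)"
        using True by (auto simp: ov_add symd_eq_iff mdeg_add)
      then show "(if ov e s (l + q) = S \<and> mdeg (l + q) = d then lk f q else 0) =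
           (if ov e s q = symd S (ov e s l) \<and> mdeg q = d - mdeg l then lk f q else 0)" by simp
    qed
    also have "\<dots> = 0"
    proof -
      have "\<not> Good e s (symd S (ov e s l)) (d - mdeg l)"
      proof
        assume "Good e s (symd S (ov e s l)) (d - mdeg l)"
        then obtain m' where m': "monS s m'" "\<not> sqf m'" "ov e s m' = symd S (ov e s l)" "mdeg m' = d - mdeg l"
          unfolding Good_def by blast
        have "monS s (m' + l)" using m' ml monS_add by blast
        moreover have "\<not> sqf (m' + l)" using m' not_sqf_add by blast
        moreover have "ov e s (m' + l) = S" using m'(3) by (simp add: ov_add symd_eq_iff add.commute)
        moreover have "mdeg (m' + l) = d" using m'(4) True by (simp add: mdeg_add)
        ultimately have "Good e s S d" unfolding Good_def by blast
        then show False using ng by blast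
      qed
      then show ?thesis using f unfolding PiP_def by blast
    qed
    finally show ?thesis .
  next
    case False
    then have "\<And>q. mdeg (l + q) \<noteq> d" by (simp add: mdeg_add)
    then show ?thesis by simp
  qed
  show "Phi e s S d (h * f) = 0"
    unfolding Phi_mult by (simp add: inner)
qed

lemma PiP_ideal:
  assumes "\<forall>b\<in>B. PiP e s b" "f \<in> ideal_in s B"
  shows "PiP e s f"
  using assms(2)
proof (induction rule: ideal_in.induct)
  case zero then show ?case by (rule PiP_zero)
next
  case (gen b) then show ?case using assms(1) by blast
next
  case (add f g) then show ?case by (simp add: PiP_add)
next
  case (mult h f) then show ?case by (simp add: PiP_mult)
qed



lemma three_cases: "(y::3) = 0 \<or> y = 1 \<or> y = 2"
proof (cases y)
  case (of_int z)
  then have "z = 0 \<or> z = 1 \<or> z = 2" by auto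
  then show ?thesis using of_int by auto
qed

lemma three_sq: "(y::3) \<noteq> 0 \<Longrightarrow> y ^ 2 = 1"
  using three_cases[of y] by auto

lemma three_one_neq: "(1::3) \<noteq> - 1" by simp

lemma four_three: "(4::3) = 1" by simp

lemma two_pow_nz: "(2::3) ^ k \<noteq> 0"
proof
  assume "(2::3) ^ k = 0"
  then have "((2::3) ^ k) ^ 2 = 0" by simp
  moreover have "((2::3) ^ k) ^ 2 = ((2::3) ^ 2) ^ k" by (metis power_mult mult.commute)
  moreover have "((2::3) ^ 2) ^ k = 1" by (simp add: power2_eq_square four_three)
  ultimately show False by simp
qed

lemma pow_parity: "(x::'a::monoid_mult) ^ 2 = 1 \<Longrightarrow> x ^ k = (if odd k then x else 1)"
proof -
  assume x: "x ^ 2 = 1"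
  have "x ^ k = x ^ (2 * (k div 2) + k mod 2)" by simp
  also have "\<dots> = (x ^ 2) ^ (k div 2) * x ^ (k mod 2)" by (simp only: power_add power_mult)
  also have "\<dots> = x ^ (k mod 2)" using x by simp
  also have "\<dots> = (if odd k then x else 1)"
  proof (cases "even k")
    case True then have "k mod 2 = 0" by (simp add: even_iff_mod_2_eq_zero)
    then show ?thesis using True by simp
  next
    case False then have "k mod 2 = 1" by (simp add: odd_iff_mod_2_eq_one)
    then show ?thesis using False by simp
  qed
  finally show ?thesis .
qed

definition meval :: "(nat \<Rightarrow>\<^sub>0 nat) \<Rightarrow> (nat \<Rightarrow> 3) \<Rightarrow> 3" where
  "meval m v = (\<Prod>i\<in>ks m. v i ^ lk m i)"

lemma eval_superset: "finite M \<Longrightarrow> ks f \<subseteq> M \<Longrightarrow> eval f v = (\<Sum>m\<in>M. lk f m * meval m v)"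
  unfolding eval_def meval_def by (rule sum.mono_neutral_left) (auto simp: in_keys_iff)

definition pt :: "(nat \<Rightarrow> nat set) \<Rightarrow> (nat \<Rightarrow> 3) \<Rightarrow> nat \<Rightarrow> 3" where
  "pt e x = (\<lambda>k. \<Prod>i\<in>e k. x i)"

lemma ov_sub: assumes "\<forall>k\<in>{1..s}. e k \<subseteq> {1..n}" shows "ov e s m \<subseteq> {1..n}"
proof
  fix v assume "v \<in> ov e s m"
  then have "wd e s v m \<noteq> 0" unfolding ov_def by (cases "wd e s v m = 0") auto
  have "\<exists>i\<in>{1..s}. v \<in> e i"
  proof (rule ccontr)
    assume "\<not> (\<exists>i\<in>{1..s}. v \<in> e i)"
    then have "wd e s v m = 0" unfolding wd_def by (intro sum.neutral) auto
    then show False using \<open>wd e s v m \<noteq> 0\<close> by simp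
  qed
  then obtain i where "i \<in> {1..s}" "v \<in> e i" by blast
  then show "v \<in> {1..n}" using assms by blast
qed

lemma L1:
  assumes E: "\<forall>k\<in>{1..s}. e k \<subseteq> {1..n}" and X: "\<forall>v\<in>{1..n}. x v ^ 2 = 1" and m: "monS s m"
  shows "meval m (pt e x) = (\<Prod>v\<in>ov e s m. x v)"
proof -
  have "meval m (pt e x) = (\<Prod>i\<in>{1..s}. (\<Prod>v\<in>e i. x v) ^ lk m i)"
    unfolding meval_def pt_def
    by (rule prod.mono_neutral_left) (use m in \<open>auto simp: monS_def in_keys_iff\<close>)
  also have "\<dots> = (\<Prod>i\<in>{1..s}. \<Prod>v\<in>{1..n}. x v ^ (if v \<in> e i then lk m i else 0))"
  proof (rule prod.cong[OF refl])
    fix i assume i: "i \<in> {1..s}"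
    have "(\<Prod>v\<in>e i. x v) ^ lk m i = (\<Prod>v\<in>e i. x v ^ lk m i)" by (simp add: prod_power_distrib)
    also have "\<dots> = (\<Prod>v\<in>{1..n}. x v ^ (if v \<in> e i then lk m i else 0))"
      by (rule prod.mono_neutral_cong_left) (use E i in auto)
    finally show "(\<Prod>v\<in>e i. x v) ^ lk m i = (\<Prod>v\<in>{1..n}. x v ^ (if v \<in> e i then lk m i else 0))" .
  qed
  also have "\<dots> = (\<Prod>v\<in>{1..n}. \<Prod>i\<in>{1..s}. x v ^ (if v \<in> e i then lk m i else 0))"
    by (rule prod.swap)
  also have "\<dots> = (\<Prod>v\<in>{1..n}. x v ^ wd e s v m)"
    unfolding wd_def by (simp add: power_sum)
  also have "\<dots> = (\<Prod>v\<in>{1..n}. if odd (wd e s v m) then x v else 1)"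
  proof (rule prod.cong[OF refl])
    fix v assume "v \<in> {1..n}"
    then have "x v ^ 2 = 1" using X by auto
    then show "x v ^ wd e s v m = (if odd (wd e s v m) then x v else 1)"
      using pow_parity[of "x v" "wd e s v m"] by simp
  qed
  also have "\<dots> = (\<Prod>v\<in>{v\<in>{1..n}. odd (wd e s v m)}. x v)"
    by (rule prod.inter_filter[symmetric]) simp
  also have "{v\<in>{1..n}. odd (wd e s v m)} = ov e s m"
    using ov_sub[OF E, of m] unfolding ov_def by auto
  finally show ?thesis .
qed

definition chi :: "nat set \<Rightarrow> (nat \<Rightarrow> 3) \<Rightarrow> 3" where
  "chi U x = (\<Prod>v\<in>U. x v)"

definition Xs :: "nat \<Rightarrow> (nat \<Rightarrow> 3) set" where
  "Xs n = PiE {1..n} (\<lambda>_. {1, -1})"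

lemma char_sum:
  assumes U: "U \<subseteq> {1..n}"
  shows "(\<Sum>x\<in>Xs n. chi U x) = (if U = {} then 2 ^ n else 0)"
proof -
  let ?f = "\<lambda>v y. if v \<in> U then y else (1::3)"
  have "(\<Sum>x\<in>Xs n. chi U x) = (\<Sum>x\<in>Xs n. \<Prod>v\<in>{1..n}. ?f v (x v))"
  proof (rule sum.cong[OF refl])
    fix x
    have "(\<Prod>v\<in>{1..n}. ?f v (x v)) = (\<Prod>v\<in>{v\<in>{1..n}. v \<in> U}. x v)"
      by (rule prod.inter_filter[symmetric]) simp
    also have "{v\<in>{1..n}. v \<in> U} = U" using U by auto
    finally show "chi U x = (\<Prod>v\<in>{1..n}. ?f v (x v))" unfolding chi_def by simp
  qed
  also have "\<dots> = (\<Prod>v\<in>{1..n}. \<Sum>y\<in>{1, -1}. ?f v y)"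
    unfolding Xs_def by (rule prod_sum_PiE[symmetric]) auto
  also have "\<dots> = (\<Prod>v\<in>{1..n}. if v \<in> U then 0 else 2)"
    by (rule prod.cong[OF refl]) (simp add: three_one_neq)
  also have "\<dots> = (if U = {} then 2 ^ n else 0)"
  proof (cases "U = {}")
    case True then show ?thesis by simp
  next
    case False
    then obtain u where "u \<in> U" by blast
    then have "u \<in> {1..n}" "(if u \<in> U then 0 else 2) = (0::3)" using U by auto
    then have "(\<Prod>v\<in>{1..n}. if v \<in> U then 0 else (2::3)) = 0"
      by (intro prod_zero) (use \<open>u \<in> U\<close> U in auto)
    then show ?thesis using False by simp
  qed
  finally show ?thesis .
qed

lemma chi_mult:
  assumes "S \<subseteq> {1..n}" "T \<subseteq> {1..n}" "\<forall>v\<in>{1..n}. x v ^ 2 = 1"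
  shows "chi S x * chi T x = chi (symd S T) x"
proof -
  have f: "finite S" "finite T" using assms(1,2) finite_subset[of _ "{1..n}"] by auto
  have "chi S x = chi (S - T) x * chi (S \<inter> T) x"
    unfolding chi_def using f prod.subset_diff[of "S \<inter> T" S] by (simp add: Diff_Int)
  moreover have "chi T x = chi (T - S) x * chi (S \<inter> T) x"
    unfolding chi_def using f prod.subset_diff[of "S \<inter> T" T] by (simp add: Diff_Int)
  moreover have "chi (S \<inter> T) x * chi (S \<inter> T) x = 1"
  proof -
    have "chi (S \<inter> T) x * chi (S \<inter> T) x = (\<Prod>v\<in>S \<inter> T. x v ^ 2)"
      unfolding chi_def by (simp add: power2_eq_square prod.distrib)
    also have "\<dots> = 1" using assms by (intro prod.neutral) auto
    finally show ?thesis .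
  qed
  moreover have "chi (symd S T) x = chi (S - T) x * chi (T - S) x"
  proof -
    have "symd S T = (S - T) \<union> (T - S)" unfolding symd_def by auto
    moreover have "prod x ((S-T) \<union> (T-S)) = prod x (S-T) * prod x (T-S)"
      by (rule prod.union_disjoint) (use f in auto)
    ultimately show ?thesis unfolding chi_def by simp
  qed
  ultimately show ?thesis by (simp add: algebra_simps)
qed



lemma symd_empty: "symd S T = {} \<longleftrightarrow> S = T"
  unfolding symd_def by auto

lemma symd_empty': "symd S T = {} \<longleftrightarrow> T = S"
  unfolding symd_def by auto

lemma symd_sub: "S \<subseteq> A \<Longrightarrow> T \<subseteq> A \<Longrightarrow> symd S T \<subseteq> A"
  unfolding symd_def by auto

lemma Xs_sq: "x \<in> Xs n \<Longrightarrow> \<forall>v\<in>{1..n}. x v ^ 2 = 1"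
  unfolding Xs_def by (auto simp: PiE_iff power2_eq_square)

lemma Xs_toric: "x \<in> Xs n \<Longrightarrow> pt e x \<in> toric_points n e s"
  unfolding Xs_def toric_points_def pt_def by (auto simp: PiE_iff intro!: exI[of _ x])

lemma eval_chi:
  assumes E: "\<forall>k\<in>{1..s}. e k \<subseteq> {1..n}" and q: "in_S s q" and X: "\<forall>v\<in>{1..n}. x v ^ 2 = 1"
  shows "eval q (pt e x) = (\<Sum>m\<in>ks q. lk q m * chi (ov e s m) x)"
proof -
  have "eval q (pt e x) = (\<Sum>m\<in>ks q. lk q m * meval m (pt e x))"
    by (rule eval_superset) auto
  also have "\<dots> = (\<Sum>m\<in>ks q. lk q m * chi (ov e s m) x)"
    by (rule sum.cong[OF refl]) (use q in \<open>simp add: L1[OF E X] chi_def in_S_monS\<close>)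
  finally show ?thesis .
qed

lemma KEY:
  assumes E: "\<forall>k\<in>{1..s}. e k \<subseteq> {1..n}" and q: "in_S s q"
    and van: "\<forall>p\<in>toric_points n e s. eval q p = 0"
  shows "(\<Sum>m\<in>ks q. if ov e s m = S then lk q m else 0) = 0"
proof (cases "S \<subseteq> {1..n}")
  case False
  have "\<And>m. ov e s m \<noteq> S" using ov_sub[OF E] False by blast
  then show ?thesis by simp
next
  case True
  have ovs: "\<And>m. ov e s m \<subseteq> {1..n}" using ov_sub[OF E] by blast
  have "0 = (\<Sum>x\<in>Xs n. chi S x * eval q (pt e x))"
    using van Xs_toric by (simp add: sum.neutral)
  also have "\<dots> = (\<Sum>x\<in>Xs n. \<Sum>m\<in>ks q. lk q m * chi (symd S (ov e s m)) x)"
  proof (rule sum.cong[OF refl])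
    fix x assume x: "x \<in> Xs n"
    have X: "\<forall>v\<in>{1..n}. x v ^ 2 = 1" using Xs_sq[OF x] .
    show "chi S x * eval q (pt e x) = (\<Sum>m\<in>ks q. lk q m * chi (symd S (ov e s m)) x)"
      unfolding eval_chi[OF E q X] sum_distrib_left
      by (rule sum.cong[OF refl]) (simp add: chi_mult[OF True ovs X, symmetric] algebra_simps)
  qed
  also have "\<dots> = (\<Sum>m\<in>ks q. lk q m * (\<Sum>x\<in>Xs n. chi (symd S (ov e s m)) x))"
    by (subst sum.swap) (simp add: sum_distrib_left)
  also have "\<dots> = (\<Sum>m\<in>ks q. lk q m * (if ov e s m = S then 2 ^ n else 0))"
    by (rule sum.cong[OF refl]) (simp add: char_sum[OF symd_sub[OF True ovs]] symd_empty')
  also have "\<dots> = 2 ^ n * (\<Sum>m\<in>ks q. if ov e s m = S then lk q m else 0)"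
    by (simp add: sum_distrib_left) (rule sum.cong[OF refl], simp)
  finally have z: "(2::3) ^ n * (\<Sum>m\<in>ks q. if ov e s m = S then lk q m else 0) = 0" by simp
  have "((2::3) ^ n * 2 ^ n) = 1"
    by (simp add: power_mult_distrib[symmetric] four_three)
  then have "(\<Sum>m\<in>ks q. if ov e s m = S then lk q m else 0) =
      (2 ^ n * 2 ^ n) * (\<Sum>m\<in>ks q. if ov e s m = S then lk q m else 0)" by simp
  also have "\<dots> = 0" using z by (simp add: mult.assoc)
  finally show ?thesis .
qed

lemma van_PiP:
  assumes E: "\<forall>k\<in>{1..s}. e k \<subseteq> {1..n}" and q: "in_S s q" and h: "homogeneous q"
    and van: "\<forall>p\<in>toric_points n e s. eval q p = 0"
  shows "PiP e s q"
  unfolding PiP_def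
proof (intro conjI allI impI)
  show "in_S s q" by (rule q)
  fix S d
  show "Phi e s S d q = 0"
  proof (cases "\<exists>m0\<in>ks q. mdeg m0 = d")
    case True
    then have "\<forall>m\<in>ks q. mdeg m = d" using h unfolding homogeneous_def by metis
    then have "Phi e s S d q = (\<Sum>m\<in>ks q. if ov e s m = S then lk q m else 0)"
      unfolding Phi_def by (intro sum.cong) auto
    then show ?thesis using KEY[OF E q van] by simp
  next
    case False
    then show ?thesis unfolding Phi_def by (intro sum.neutral) auto
  qed
qed



lemma card_filter_union:
  "finite A \<Longrightarrow> finite B \<Longrightarrow> A \<inter> B = {} \<Longrightarrow>
   card {k\<in>A \<union> B. P k} = card {k\<in>A. P k} + card {k\<in>B. P k}"
proof -
  assume a: "finite A" "finite B" "A \<inter> B = {}"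
  have "{k\<in>A \<union> B. P k} = {k\<in>A. P k} \<union> {k\<in>B. P k}" by auto
  moreover have "card ({k\<in>A. P k} \<union> {k\<in>B. P k}) = card {k\<in>A. P k} + card {k\<in>B. P k}"
    by (rule card_Un_disjoint) (use a in auto)
  ultimately show ?thesis by simp
qed

lemma par3: "even ((a::nat) + b) \<longleftrightarrow> (even (a + c) \<longleftrightarrow> even (b + c))"
  by auto

lemma W_parity:
  assumes "finite C" "finite D"
  shows "even (card {k\<in>(C - D) \<union> (D - C). P k}) \<longleftrightarrow> (even (card {k\<in>C. P k}) \<longleftrightarrow> even (card {k\<in>D. P k}))"
proof -
  have 1: "card {k\<in>(C - D) \<union> (D - C). P k} = card {k\<in>C - D. P k} + card {k\<in>D - C. P k}"
    by (rule card_filter_union) (use assms in auto)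
  have 2: "card {k\<in>C. P k} = card {k\<in>C - D. P k} + card {k\<in>C \<inter> D. P k}"
  proof -
    have "C = (C - D) \<union> (C \<inter> D)" by auto
    then have "card {k\<in>C. P k} = card {k\<in>(C - D) \<union> (C \<inter> D). P k}" by simp
    also have "\<dots> = card {k\<in>C - D. P k} + card {k\<in>C \<inter> D. P k}"
      by (rule card_filter_union) (use assms in auto)
    finally show ?thesis .
  qed
  have 3: "card {k\<in>D. P k} = card {k\<in>D - C. P k} + card {k\<in>C \<inter> D. P k}"
  proof -
    have "D = (D - C) \<union> (C \<inter> D)" by auto
    then have "card {k\<in>D. P k} = card {k\<in>(D - C) \<union> (C \<inter> D). P k}" by simp
    also have "\<dots> = card {k\<in>D - C. P k} + card {k\<in>C \<inter> D. P k}"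
      by (rule card_filter_union) (use assms in auto)
    finally show ?thesis .
  qed
  show ?thesis unfolding 1 2 3 by (rule par3)
qed

lemma comb:
  assumes fC: "finite C" and fD: "finite D" and ne: "C \<noteq> D" and le: "card D \<le> card C"
    and ev: "even (card C - card D)"
    and mx: "card D = card C \<Longrightarrow> Max ((C - D) \<union> (D - C)) \<in> D"
  shows "\<exists>A B. A \<subseteq> C \<and> A \<noteq> {} \<and> A \<inter> B = {} \<and> A \<union> B = (C - D) \<union> (D - C)
     \<and> card A = card B \<and> Max (A \<union> B) \<in> B"
proof -
  define W where "W = (C - D) \<union> (D - C)"
  define A0 where "A0 = C - D"
  define B0 where "B0 = D - C"
  have fW: "finite W" using fC fD W_def by auto
  have Wne: "W \<noteq> {}" using ne W_def by auto
  define w where "w = Max W"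
  have wW: "w \<in> W" using fW Wne w_def by simp
  have cC: "card C = card A0 + card (C \<inter> D)"
  proof -
    have "C = A0 \<union> (C \<inter> D)" using A0_def by auto
    moreover have "card (A0 \<union> (C \<inter> D)) = card A0 + card (C \<inter> D)"
      by (rule card_Un_disjoint) (use fC A0_def in auto)
    ultimately show ?thesis by simp
  qed
  have cD: "card D = card B0 + card (C \<inter> D)"
  proof -
    have "D = B0 \<union> (C \<inter> D)" using B0_def by auto
    moreover have "card (B0 \<union> (C \<inter> D)) = card B0 + card (C \<inter> D)"
      by (rule card_Un_disjoint) (use fD B0_def in auto)
    ultimately show ?thesis by simp
  qed
  have cW: "card W = card A0 + card B0"
    unfolding W_def A0_def B0_def by (rule card_Un_disjoint) (use fC fD in auto)
  have lB: "card B0 \<le> card A0" using le cC cD by simp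
  have "card A0 - card B0 = card C - card D" using cC cD by simp
  then have "even (card A0 - card B0)" using ev by simp
  then obtain k where "card A0 - card B0 = 2 * k" by (rule evenE)
  then have k: "card A0 = card B0 + 2 * k" using lB by simp
  define r where "r = card B0 + k"
  have fA0: "finite A0" using fC A0_def by auto
  have feas: "r \<le> card (A0 - {w})"
  proof (cases "w \<in> A0")
    case True
    have "k \<noteq> 0"
    proof
      assume "k = 0"
      then have "card D = card C" using k cC cD by simp
      then have "w \<in> D" using mx w_def W_def by simp
      then show False using True A0_def by auto
    qed
    then show ?thesis using True fA0 k r_def by simp
  next
    case False
    then show ?thesis using k r_def by simp
  qed
  obtain A where A: "A \<subseteq> A0 - {w}" "card A = r" "finite A"
    using obtain_subset_with_card_n[OF feas] by blast
  define B where "B = W - A"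
  have AW: "A \<subseteq> W" using A unfolding W_def A0_def by auto
  have AB: "A \<inter> B = {}" "A \<union> B = W" using AW B_def by auto
  have cB: "card B = card W - card A" unfolding B_def using AW fW by (simp add: card_Diff_subset A(3))
  have cAB: "card A = card B" using cB cW A(2) r_def k by simp
  have rpos: "r \<noteq> 0"
  proof
    assume "r = 0"
    then have "card A0 = 0" "card B0 = 0" using r_def k by auto
    then have "card W = 0" using cW by simp
    then show False using fW Wne by simp
  qed
  have "A \<noteq> {}" using A(2) rpos by auto
  moreover have "A \<subseteq> C" using A A0_def by auto
  moreover have "Max (A \<union> B) \<in> B" using AB wW w_def A(1) B_def by auto
  ultimately show ?thesis using AB cAB W_def by blast
qed



lemma keys_binom: "a \<noteq> b \<Longrightarrow> ks (Poly_Mapping.single a (1::3) - Poly_Mapping.single b 1) = {a, b}"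
  by (auto simp: in_keys_iff lookup_minus lookup_single when_def split: if_splits)

lemma lead_binom:
  assumes "a \<noteq> b" "grevlex_less b a"
  shows "lead_mon (Poly_Mapping.single a (1::3) - Poly_Mapping.single b 1) = a"
  by (rule lead_mon_eqI) (use assms keys_binom[OF assms(1)] in auto)

lemma binom_nz: "a \<noteq> b \<Longrightarrow> Poly_Mapping.single a (1::3) - Poly_Mapping.single b 1 \<noteq> 0"
  using keys_binom by fastforce

lemma lead_single: "lead_mon (Poly_Mapping.single a (1::3)) = a"
  by (rule lead_mon_eqI) auto

lemma mdeg_single: "mdeg (Poly_Mapping.single i k) = k"
  unfolding mdeg_def by simp

definition V0 :: "nat \<Rightarrow> (nat \<Rightarrow> nat set) \<Rightarrow> nat \<Rightarrow> poly3 set" where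
  "V0 n e s = {f. in_S s f \<and> homogeneous f \<and> (\<forall>p\<in>toric_points n e s. eval f p = 0)}"

lemma vanishing_V0: "vanishing_ideal n e s = ideal_in s (V0 n e s)"
  unfolding vanishing_ideal_def V0_def by simp

lemma binom_van:
  assumes a: "monS s a" and b: "monS s b" and d: "mdeg a = mdeg b"
    and ev: "\<forall>p\<in>toric_points n e s. meval a p = meval b p"
  shows "Poly_Mapping.single a (1::3) - Poly_Mapping.single b 1 \<in> V0 n e s"
proof (cases "a = b")
  case True
  then show ?thesis unfolding V0_def in_S_def homogeneous_def eval_def by simp
next
  case False
  have k: "ks (Poly_Mapping.single a (1::3) - Poly_Mapping.single b 1) = {a, b}"
    using keys_binom[OF False] .
  have "in_S s (Poly_Mapping.single a (1::3) - Poly_Mapping.single b 1)"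
    unfolding in_S_monS k using a b by auto
  moreover have "homogeneous (Poly_Mapping.single a (1::3) - Poly_Mapping.single b 1)"
    unfolding homogeneous_def k using d by auto
  moreover have "\<forall>p\<in>toric_points n e s. eval (Poly_Mapping.single a (1::3) - Poly_Mapping.single b 1) p = 0"
  proof
    fix p assume p: "p \<in> toric_points n e s"
    have "eval (Poly_Mapping.single a (1::3) - Poly_Mapping.single b 1) p
       = (\<Sum>m\<in>{a,b}. lk (Poly_Mapping.single a (1::3) - Poly_Mapping.single b 1) m * meval m p)"
      by (rule eval_superset) (simp_all add: k)
    also have "\<dots> = meval a p - meval b p"
      using False by (simp add: lookup_minus lookup_single when_def)
    also have "\<dots> = 0" using ev p by simp
    finally show "eval (Poly_Mapping.single a (1::3) - Poly_Mapping.single b 1) p = 0" .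
  qed
  ultimately show ?thesis unfolding V0_def by blast
qed

lemma toric_E:
  assumes "p \<in> toric_points n e s"
  obtains x where "p = pt e x" "\<forall>v\<in>{1..n}. x v ^ 2 = 1"
proof -
  obtain x where "p = (\<lambda>k. \<Prod>i\<in>e k. x i)" "\<forall>i\<in>{1..n}. x i \<noteq> 0"
    using assms unfolding toric_points_def by blast
  then show ?thesis using that[of x] three_sq unfolding pt_def by blast
qed

lemma T_V0:
  assumes E: "\<forall>k\<in>{1..s}. e k \<subseteq> {1..n}" and i: "i \<in> {1..s}" and j: "j \<in> {1..s}"
  shows "var i ^ 2 - var j ^ 2 \<in> V0 n e s"
proof -
  have me: "meval (Poly_Mapping.single k 2) p = 1" if k: "k \<in> {1..s}" and p: "p \<in> toric_points n e s" for k p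
  proof -
    obtain x where x: "p = pt e x" "\<forall>v\<in>{1..n}. x v ^ 2 = 1" using toric_E[OF p] by blast
    have "meval (Poly_Mapping.single k 2) p = (\<Prod>v\<in>e k. x v) ^ 2"
      unfolding meval_def x(1) pt_def by simp
    also have "\<dots> = (\<Prod>v\<in>e k. x v ^ 2)" by (simp add: prod_power_distrib)
    also have "\<dots> = 1" using E k x(2) by (intro prod.neutral) blast
    finally show ?thesis .
  qed
  show ?thesis unfolding var_sq
    by (rule binom_van) (use i j me in \<open>auto simp: monS_def mdeg_single\<close>)
qed

lemma ov_chi:
  assumes "A \<subseteq> {1..s}"
  shows "v \<in> ov e s (chiA A) \<longleftrightarrow> odd (card {k\<in>A. v \<in> e k})"
proof -
  have fA: "finite A" using assms finite_subset by blast
  have "monS s (chiA A)" "sqf (chiA A)" using assms fA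
    by (auto simp: monS_def ks_chi sqf_def lk_chi)
  then have "Pm s (chiA A) = A" using Pm_sqf ks_chi[OF fA] by simp
  then show ?thesis unfolding ov_def using wd_parity[of e s v "chiA A"] by simp
qed

lemma E_V0:
  assumes E: "\<forall>k\<in>{1..s}. e k \<subseteq> {1..n}"
    and g: "g \<in> eulerian_binomials n e s"
  shows "g \<in> V0 n e s"
proof -
  obtain A B where AB: "g = (\<Prod>i\<in>A. var i) - (\<Prod>i\<in>B. var i)" "A \<subseteq> {1..s}" "B \<subseteq> {1..s}"
    "A \<inter> B = {}" "card A = card B" "\<forall>v. even (card {k \<in> A \<union> B. v \<in> e k})"
    using g unfolding eulerian_binomials_def by blast
  have fA: "finite A" and fB: "finite B" using AB(2,3) finite_subset[of _ "{1..s}"] by auto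
  have g': "g = Poly_Mapping.single (chiA A) 1 - Poly_Mapping.single (chiA B) 1"
    using AB(1) prod_var fA fB by simp
  have ovq: "ov e s (chiA A) = ov e s (chiA B)"
  proof
    show "ov e s (chiA A) \<subseteq> ov e s (chiA B)"
    proof
      fix v assume "v \<in> ov e s (chiA A)"
      moreover have "card {k \<in> A \<union> B. v \<in> e k} = card {k\<in>A. v \<in> e k} + card {k\<in>B. v \<in> e k}"
        by (rule card_filter_union) (use fA fB AB in auto)
      moreover have "even (card {k \<in> A \<union> B. v \<in> e k})" using AB(6) by blast
      ultimately show "v \<in> ov e s (chiA B)" using ov_chi[OF AB(2), of v e] ov_chi[OF AB(3), of v e] by simp
    qed
    show "ov e s (chiA B) \<subseteq> ov e s (chiA A)"
    proof
      fix v assume "v \<in> ov e s (chiA B)"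
      moreover have "card {k \<in> A \<union> B. v \<in> e k} = card {k\<in>A. v \<in> e k} + card {k\<in>B. v \<in> e k}"
        by (rule card_filter_union) (use fA fB AB in auto)
      moreover have "even (card {k \<in> A \<union> B. v \<in> e k})" using AB(6) by blast
      ultimately show "v \<in> ov e s (chiA A)" using ov_chi[OF AB(2), of v e] ov_chi[OF AB(3), of v e] by simp
    qed
  qed
  have mA: "monS s (chiA A)" and mB: "monS s (chiA B)" using AB fA fB by (auto simp: monS_def ks_chi)
  show ?thesis unfolding g'
  proof (rule binom_van[OF mA mB])
    show "mdeg (chiA A) = mdeg (chiA B)" using fA fB AB by (simp add: mdeg_chi)
    show "\<forall>p\<in>toric_points n e s. meval (chiA A) p = meval (chiA B) p"
    proof
      fix p assume p: "p \<in> toric_points n e s"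
      obtain x where x: "p = pt e x" "\<forall>v\<in>{1..n}. x v ^ 2 = 1" using toric_E[OF p] by blast
      show "meval (chiA A) p = meval (chiA B) p"
        unfolding x(1) L1[OF E x(2) mA] L1[OF E x(2) mB] ovq ..
    qed
  qed
qed



lemma par_from_ov:
  assumes "ov e s m = ov e s m2"
  shows "even (card {k\<in>Pm s m. v \<in> e k}) = even (card {k\<in>Pm s m2. v \<in> e k})"
proof -
  have "odd (wd e s v m) = odd (wd e s v m2)" using assms unfolding ov_def by (auto simp: set_eq_iff)
  then show ?thesis using wd_parity[of e s v m] wd_parity[of e s v m2] by simp
qed

lemma sqf_case:
  assumes P: "PiP e s f" and f: "f \<noteq> 0" and sq: "sqf (lead_mon f)"
  defines "C \<equiv> ks (lead_mon f)"
  shows "\<exists>D. D \<subseteq> {1..s} \<and> C \<noteq> D \<and> card D \<le> card C \<and> even (card C - card D)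
     \<and> (card D = card C \<longrightarrow> Max ((C - D) \<union> (D - C)) \<in> D)
     \<and> (\<forall>v. even (card {k\<in>C. v \<in> e k}) = even (card {k\<in>D. v \<in> e k}))"
proof -
  define m where "m = lead_mon f"
  have lp: "m \<in> ks f" "\<forall>m'\<in>ks f. m' = m \<or> grevlex_less m' m"
    using lead_mon_prop[OF f] m_def by auto
  have inS: "in_S s f" using P PiP_def by blast
  have mS: "monS s m" using lp(1) inS in_S_monS by blast
  have sqm: "sqf m" using sq m_def by simp
  have C: "C = ks m" using C_def m_def by simp
  have fC: "finite C" using C by simp
  have mC: "m = chiA C" using sqf_chi[OF sqm] C by simp
  have PmC: "Pm s m = C" using Pm_sqf[OF mS sqm] C by simp
  have cC: "card C = mdeg m" using mC fC mdeg_chi by simp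
  show ?thesis
  proof (cases "Good e s (ov e s m) (mdeg m)")
    case True
    then obtain m2 where m2: "monS s m2" "\<not> sqf m2" "ov e s m2 = ov e s m" "mdeg m2 = mdeg m"
      unfolding Good_def by blast
    define D where "D = Pm s m2"
    have lt: "card D < card C" using Pm_less[OF m2(1,2)] m2(4) cC D_def by simp
    have "even (mdeg m2) = even (card D)" using Pm_parity[OF m2(1)] D_def by simp
    then have ev: "even (card C - card D)" using lt cC m2(4) by (simp add: even_diff_nat)
    have par: "\<forall>v. even (card {k\<in>C. v \<in> e k}) = even (card {k\<in>D. v \<in> e k})"
      using par_from_ov[OF m2(3)[symmetric]] PmC D_def by simp
    have "D \<subseteq> {1..s}" using D_def Pm_monS by simp
    then show ?thesis using lt ev par by (intro exI[of _ D]) auto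
  next
    case False
    then have z: "Phi e s (ov e s m) (mdeg m) f = 0" using P unfolding PiP_def by blast
    have "\<exists>m2\<in>ks f. m2 \<noteq> m \<and> ov e s m2 = ov e s m \<and> mdeg m2 = mdeg m"
    proof (rule ccontr)
      assume na: "\<not> ?thesis"
      have "Phi e s (ov e s m) (mdeg m) f = (\<Sum>x\<in>ks f. if x = m then lk f m else 0)"
        unfolding Phi_def by (rule sum.cong[OF refl]) (use na in auto)
      also have "\<dots> = lk f m" using lp(1) by simp
      finally have "lk f m = 0" using z by simp
      then show False using lp(1) by (simp add: in_keys_iff)
    qed
    then obtain m2 where m2: "m2 \<in> ks f" "m2 \<noteq> m" "ov e s m2 = ov e s m" "mdeg m2 = mdeg m" by blast
    have m2S: "monS s m2" using m2(1) inS in_S_monS by blast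
    have sq2: "sqf m2" using False m2 m2S unfolding Good_def by blast
    define D where "D = ks m2"
    have fD: "finite D" using D_def by simp
    have mD: "m2 = chiA D" using sqf_chi[OF sq2] D_def by simp
    have PmD: "Pm s m2 = D" using Pm_sqf[OF m2S sq2] D_def by simp
    have cD: "card D = card C" using mD fD mdeg_chi m2(4) cC by simp
    have CD: "C \<noteq> D" using mC mD m2(2) by auto
    have gl: "grevlex_less m2 m" using lp(2) m2(1,2) by blast
    then obtain k where k: "lk m k < lk m2 k" "\<forall>j>k. lk m2 j = lk m j"
      using m2(4) unfolding grevlex_less_def by auto
    have kD: "k \<in> D" "k \<notin> C"
      using k(1) mC mD fC fD by (auto simp: lk_chi split: if_splits)
    have "Max ((C - D) \<union> (D - C)) = k"
    proof (rule Max_eqI)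
      show "finite ((C - D) \<union> (D - C))" using fC fD by simp
      show "k \<in> (C - D) \<union> (D - C)" using kD by simp
      fix y assume y: "y \<in> (C - D) \<union> (D - C)"
      show "y \<le> k"
      proof (rule ccontr)
        assume "\<not> y \<le> k"
        then have "lk m2 y = lk m y" using k(2) by simp
        then have "(y \<in> D) = (y \<in> C)" using mC mD fC fD by (simp add: lk_chi split: if_splits)
        then show False using y by auto
      qed
    qed
    then have mx: "Max ((C - D) \<union> (D - C)) \<in> D" using kD by simp
    have par: "\<forall>v. even (card {k\<in>C. v \<in> e k}) = even (card {k\<in>D. v \<in> e k})"
      using par_from_ov[OF m2(3)[symmetric]] PmC PmD by simp
    have "D \<subseteq> {1..s}" using m2S D_def monS_def by simp
    then show ?thesis using CD cD mx par by (intro exI[of _ D]) auto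
  qed
qed



lemma PiP_sq: assumes "s \<ge> 1" shows "PiP e s (var s ^ 2)"
  unfolding PiP_def
proof (intro conjI allI impI)
  let ?a = "Poly_Mapping.single s (2::nat)"
  show "in_S s (var s ^ 2)" unfolding var_sq in_S_def using assms by simp
  fix S d assume ng: "\<not> Good e s S d"
  have "\<not> (ov e s ?a = S \<and> mdeg ?a = d)"
  proof
    assume h: "ov e s ?a = S \<and> mdeg ?a = d"
    have "monS s ?a" using assms by (simp add: monS_def)
    moreover have "\<not> sqf ?a" by (auto simp: sqf_def intro!: exI[of _ s])
    ultimately have "Good e s S d" using h unfolding Good_def by blast
    then show False using ng by blast
  qed
  moreover have k1: "ks (Poly_Mapping.single ?a (1::3)) = {?a}" by simp
  ultimately show "Phi e s S d (var s ^ 2) = 0" unfolding var_sq Phi_def k1 by simp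
qed

lemma J_PiP:
  assumes E: "\<forall>k\<in>{1..s}. e k \<subseteq> {1..n}" and s: "s \<ge> 1"
    and f: "f \<in> ideal_in s (vanishing_ideal n e s \<union> {var s ^ 2})"
  shows "PiP e s f"
proof (rule PiP_ideal[OF _ f], intro ballI)
  fix b assume b: "b \<in> vanishing_ideal n e s \<union> {var s ^ 2}"
  show "PiP e s b"
  proof (cases "b = var s ^ 2")
    case True then show ?thesis using PiP_sq[OF s] by simp
  next
    case False
    then have "b \<in> ideal_in s (V0 n e s)" using b vanishing_V0 by auto
    moreover have "\<forall>c\<in>V0 n e s. PiP e s c"
      using van_PiP[OF E] unfolding V0_def by blast
    ultimately show ?thesis using PiP_ideal by blast
  qed
qed

lemma V0_J: "g \<in> V0 n e s \<Longrightarrow> g \<in> ideal_in s (vanishing_ideal n e s \<union> {var s ^ 2})"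
  unfolding vanishing_V0 by (blast intro: ideal_in.gen)

theorem proposition2p3:
  fixes n s :: nat and e :: "nat \<Rightarrow> nat set"
  assumes "s \<ge> 1"
    and "\<forall>k\<in>{1..s}. e k \<subseteq> {1..n} \<and> card (e k) = 2"
    and "inj_on e {1..s}"
  shows "is_groebner_basis (T_set s \<union> eulerian_binomials n e s \<union> {var s ^ 2})
           (ideal_in s (vanishing_ideal n e s \<union> {var s ^ 2}))"
proof -
  have E: "\<forall>k\<in>{1..s}. e k \<subseteq> {1..n}" using assms(2) by blast
  let ?G = "T_set s \<union> eulerian_binomials n e s \<union> {var s ^ 2}"
  let ?J = "ideal_in s (vanishing_ideal n e s \<union> {var s ^ 2})"
  have sub: "?G \<subseteq> ?J"
  proof
    fix g assume g: "g \<in> ?G"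
    show "g \<in> ?J"
    proof (cases "g \<in> T_set s")
      case True
      then obtain i j where "g = var i ^ 2 - var j ^ 2" "i \<in> {1..s}" "j \<in> {1..s}"
        unfolding T_set_def by blast
      then show ?thesis using T_V0[OF E] V0_J by blast
    next
      case False
      show ?thesis
      proof (cases "g \<in> eulerian_binomials n e s")
        case True then show ?thesis using E_V0[OF E] V0_J by blast
      next
        case False
        then have "g = var s ^ 2" using g \<open>g \<notin> T_set s\<close> by blast
        then show ?thesis by (blast intro: ideal_in.gen)
      qed
    qed
  qed
  have main: "\<exists>g\<in>?G. g \<noteq> 0 \<and> mon_dvd (lead_mon g) (lead_mon f)" if f: "f \<in> ?J" "f \<noteq> 0" for f
  proof -
    have P: "PiP e s f" using J_PiP[OF E assms(1) f(1)] .
    define m where "m = lead_mon f"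
    have lp: "m \<in> ks f" using lead_mon_prop[OF f(2)] m_def by auto
    have inS: "in_S s f" using P PiP_def by blast
    have mS: "monS s m" using lp inS in_S_monS by blast
    show ?thesis
    proof (cases "sqf m")
      case False
      then obtain i where i: "lk m i > 1" unfolding sqf_def by (auto simp: not_le)
      then have "i \<in> ks m" by (auto simp: in_keys_iff)
      then have iS: "i \<in> {1..s}" using mS monS_def by auto
      show ?thesis
      proof (cases "i = s")
        case True
        have "var s ^ 2 \<noteq> 0"
        proof
          assume "var s ^ 2 = 0"
          then have "lk (var s ^ 2) (Poly_Mapping.single s 2) = 0" by simp
          then show False unfolding var_sq by simp
        qed
        moreover have "mon_dvd (lead_mon (var s ^ 2)) m"
          unfolding var_sq lead_single mon_dvd_def using i True
          by (auto simp: lookup_single when_def)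
        ultimately show ?thesis using m_def by blast
      next
        case False
        then have is': "i < s" using iS by auto
        let ?a = "Poly_Mapping.single i (2::nat)" and ?b = "Poly_Mapping.single s (2::nat)"
        have ab: "?a \<noteq> ?b" using False by (metis lookup_single_eq lookup_single_not_eq zero_neq_numeral)
        have gl: "grevlex_less ?b ?a"
          unfolding grevlex_less_def mdeg_single using is'
          by (auto simp: lookup_single when_def intro!: exI[of _ s])
        have "s \<in> {1..s}" using assms(1) by simp
        then have gT: "var i ^ 2 - var s ^ 2 \<in> T_set s" unfolding T_set_def using iS by blast
        have eq: "var i ^ 2 - var s ^ 2 = Poly_Mapping.single ?a 1 - Poly_Mapping.single ?b 1"
          unfolding var_sq ..
        have "var i ^ 2 - var s ^ 2 \<noteq> 0" unfolding eq using binom_nz[OF ab] .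
        moreover have "mon_dvd (lead_mon (var i ^ 2 - var s ^ 2)) m"
          unfolding eq lead_binom[OF ab gl] mon_dvd_def using i
          by (auto simp: lookup_single when_def)
        ultimately show ?thesis using gT m_def by blast
      qed
    next
      case True
      define C where "C = ks m"
      have fC: "finite C" using C_def by simp
      have CS: "C \<subseteq> {1..s}" using mS C_def monS_def by simp
      have mC: "m = chiA C" using sqf_chi[OF True] C_def by simp
      obtain D where D: "D \<subseteq> {1..s}" "C \<noteq> D" "card D \<le> card C" "even (card C - card D)"
        "card D = card C \<longrightarrow> Max ((C - D) \<union> (D - C)) \<in> D"
        "\<forall>v. even (card {k\<in>C. v \<in> e k}) = even (card {k\<in>D. v \<in> e k})"
        using sqf_case[OF P f(2)] True m_def C_def by blast
      have fD: "finite D" using D(1) finite_subset by blast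
      obtain A B where AB: "A \<subseteq> C" "A \<noteq> {}" "A \<inter> B = {}" "A \<union> B = (C - D) \<union> (D - C)"
        "card A = card B" "Max (A \<union> B) \<in> B"
        using comb[OF fC fD D(2) D(3) D(4)] D(5) by blast
      have fA: "finite A" and fB: "finite B" using AB(4) fC fD finite_subset[of A] finite_subset[of B] by auto
      have AS: "A \<subseteq> {1..s}" using AB(1) CS by auto
      have BS: "B \<subseteq> {1..s}" using AB(4) CS D(1) by auto
      have eul: "\<forall>v. even (card {k \<in> A \<union> B. v \<in> e k})"
        using W_parity[OF fC fD] D(6) AB(4) by simp
      let ?g = "(\<Prod>i\<in>A. var i) - (\<Prod>i\<in>B. var i)"
      have gE: "?g \<in> eulerian_binomials n e s"
        unfolding eulerian_binomials_def using AS BS AB(3) AB(5) eul by blast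
      have eq: "?g = Poly_Mapping.single (chiA A) 1 - Poly_Mapping.single (chiA B) 1"
        using prod_var fA fB by simp
      have AneB: "A \<noteq> B" using AB(2,3) by auto
      have chne: "chiA A \<noteq> chiA B" using AneB ks_chi fA fB by metis
      have gl: "grevlex_less (chiA B) (chiA A)"
      proof -
        define k where "k = Max (A \<union> B)"
        have kB: "k \<in> B" "k \<notin> A" using AB(6,3) k_def by auto
        have "\<forall>j>k. j \<notin> A \<union> B"
        proof (intro allI impI)
          fix j assume "k < j"
          show "j \<notin> A \<union> B"
          proof
            assume "j \<in> A \<union> B"
            then have "j \<le> k" unfolding k_def using fA fB by (simp add: Max_ge)
            then show False using \<open>k < j\<close> by simp
          qed
        qed
        then have "\<forall>j>k. lk (chiA B) j = lk (chiA A) j" using fA fB by (auto simp: lk_chi)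
        moreover have "lk (chiA A) k < lk (chiA B) k" using kB fA fB by (simp add: lk_chi)
        moreover have "mdeg (chiA B) = mdeg (chiA A)" using fA fB AB(5) by (simp add: mdeg_chi)
        ultimately show ?thesis unfolding grevlex_less_def by blast
      qed
      have "?g \<noteq> 0" unfolding eq using binom_nz[OF chne] .
      moreover have "mon_dvd (lead_mon ?g) m"
        unfolding eq lead_binom[OF chne gl] mon_dvd_def mC using AB(1) fA fC
        by (auto simp: lk_chi)
      ultimately show ?thesis using gE m_def by blast
    qed
  qed
  show ?thesis unfolding is_groebner_basis_def using sub main by blast
qed


end
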